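(* Let $(H_1,+_1,\circ_1)$ and $(H_2,+_2,\circ_2)$ be commutative multiplicative hyperrings with identity, and let $P_1$ and $P_2$ be nonzero proper strong $\mathcal{C}$-hyperideals of $H_1$ and $H_2$, respectively. Then $P_1$ is an sdf-absorbing hyperideal of $H_1$ if and only if $P_1\times H_2$ is an sdf-absorbing hyperideal of $H_1\times H_2$.
   Context: A commutative multiplicative hyperring $(H,+,\circ)$ consists of an abelian group $(H,+)$ and an associative, commutative hyperoperation $\circ: H\times H\to P^*(H)$ with $x\circ(y+z)\subseteq x\circ y+x\circ z$ and $x\circ(-y)=-(x\circ y)=(-x)\circ y$. For subsets $A,B$, $A\circ B=\bigcup_{a\in A,b\in B}a\circ b$, $A\pm B=\{a\pm b\}$; $x^2=x\circ x$. Identity: $x\in x\circ 1$ for all $x$. $H_1\times H_2$ is the hyperring with $(x_1,x_2)+(y_1,y_2)=(x_1+_1y_1,x_2+_2y_2)$ and $(x_1,x_2)\circ(y_1,y_2)=\{(a,b): a\in x_1\circ_1y_1, b\in x_2\circ_2y_2\}$. A hyperideal is a nonempty $P$ with $x-y\in P$ and $r\circ x\subseteq P$ for $x,y\in P$, $r\in H$. Let $\mathcal{C}=\{c_1\circ\cdots\circ c_n: c_i\in H\}$ and $\mathfrak{C}=\{\sum_{i=1}^m C_i: C_i\in\mathcal{C}\}$; $P$ is a strong $\mathcal{C}$-hyperideal if for every $D\in\mathfrak{C}$, $D\cap P\neq\varnothing$ implies $D\subseteq P$. A proper hyperideal $P$ is sdf-absorbing if whenever $x,y$ are nonzero and $x^2-y^2\subseteq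 P$, then $x-y\in P$ or $x+y\in P$. *)

theory Defs
  imports Main "HOL-Library.Product_Plus"
begin

text \<open>A hyperoperation on the whole type 'a (the carrier of the additive abelian group).\<close>
type_synonym 'a hop = "'a \<Rightarrow> 'a \<Rightarrow> 'a set"

definition hsetmult :: "'a hop \<Rightarrow> 'a set \<Rightarrow> 'a set \<Rightarrow> 'a set" where
  "hsetmult m A B = (\<Union>a\<in>A. \<Union>b\<in>B. m a b)"

definition hsetplus :: "'a::ab_group_add set \<Rightarrow> 'a set \<Rightarrow> 'a set" where
  "hsetplus A B = {a + b | a b. a \<in> A \<and> b \<in> B}"

definition hsetminus :: "'a::ab_group_add set \<Rightarrow> 'a set \<Rightarrow> 'a set" where
  "hsetminus A B = {a - b | a b. a \<in> A \<and> b \<in> B}"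

definition hsetneg :: "'a::ab_group_add set \<Rightarrow> 'a set" where
  "hsetneg A = {- a | a. a \<in> A}"

definition comm_mult_hyperring :: "('a::ab_group_add) hop \<Rightarrow> bool" where
  "comm_mult_hyperring m \<longleftrightarrow>
     (\<forall>x y. m x y \<noteq> {}) \<and>
     (\<forall>x y z. hsetmult m (m x y) {z} = hsetmult m {x} (m y z)) \<and>
     (\<forall>x y. m x y = m y x) \<and>
     (\<forall>x y z. m x (y + z) \<subseteq> hsetplus (m x y) (m x z)) \<and>
     (\<forall>x y. m x (- y) = hsetneg (m x y) \<and> hsetneg (m x y) = m (- x) y)"

definition has_identity :: "('a::ab_group_add) hop \<Rightarrow> bool" where
  "has_identity m \<longleftrightarrow> (\<exists>e. \<forall>x. x \<in> m x e)"

definition hyperideal :: "('a::ab_group_add) hop \<Rightarrow> 'a set \<Rightarrow> bool" where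
  "hyperideal m P \<longleftrightarrow> P \<noteq> {} \<and> (\<forall>x\<in>P. \<forall>y\<in>P. x - y \<in> P) \<and>
     (\<forall>r x. x \<in> P \<longrightarrow> m r x \<subseteq> P)"

definition proper_hyperideal :: "('a::ab_group_add) hop \<Rightarrow> 'a set \<Rightarrow> bool" where
  "proper_hyperideal m P \<longleftrightarrow> hyperideal m P \<and> P \<noteq> UNIV"

fun hlistprod :: "'a hop \<Rightarrow> 'a list \<Rightarrow> 'a set" where
  "hlistprod m [] = {}"
| "hlistprod m [c] = {c}"
| "hlistprod m (c # cs) = hsetmult m {c} (hlistprod m cs)"

definition hyper_C :: "'a hop \<Rightarrow> 'a set set" where
  "hyper_C m = {hlistprod m cs | cs. cs \<noteq> []}"

fun hlistsum :: "('a::ab_group_add) set list \<Rightarrow> 'a set" where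
  "hlistsum [] = {0}"
| "hlistsum [C] = C"
| "hlistsum (C # Cs) = hsetplus C (hlistsum Cs)"

definition hyper_frakC :: "('a::ab_group_add) hop \<Rightarrow> 'a set set" where
  "hyper_frakC m = {hlistsum Cs | Cs. Cs \<noteq> [] \<and> set Cs \<subseteq> hyper_C m}"

definition strong_C_hyperideal :: "('a::ab_group_add) hop \<Rightarrow> 'a set \<Rightarrow> bool" where
  "strong_C_hyperideal m P \<longleftrightarrow> hyperideal m P \<and>
     (\<forall>D\<in>hyper_frakC m. D \<inter> P \<noteq> {} \<longrightarrow> D \<subseteq> P)"

definition sdf_absorbing :: "('a::ab_group_add) hop \<Rightarrow> 'a set \<Rightarrow> bool" where
  "sdf_absorbing m P \<longleftrightarrow> proper_hyperideal m P \<and>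
     (\<forall>x y. x \<noteq> 0 \<longrightarrow> y \<noteq> 0 \<longrightarrow> hsetminus (m x x) (m y y) \<subseteq> P \<longrightarrow>
        x - y \<in> P \<or> x + y \<in> P)"

text \<open>Product hyperoperation on H1 \<times> H2 (addition is componentwise via Product_Plus).\<close>
definition prod_hop :: "'a hop \<Rightarrow> 'b hop \<Rightarrow> ('a \<times> 'b) hop" where
  "prod_hop m1 m2 x y = m1 (fst x) (fst y) \<times> m2 (snd x) (snd y)"

end

theory Submission
  imports Defs
begin

lemma minus_sub:
  assumes ne: "\<And>u v. m2 u v \<noteq> {}"
    and h: "hsetminus (prod_hop m1 m2 x x) (prod_hop m1 m2 y y) \<subseteq> P1 \<times> (UNIV :: 'b::ab_group_add set)"
  shows "hsetminus (m1 (fst x) (fst x)) (m1 (fst y) (fst y)) \<subseteq> (P1 :: 'a::ab_group_add set)"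
proof
  fix z assume "z \<in> hsetminus (m1 (fst x) (fst x)) (m1 (fst y) (fst y))"
  then obtain a b where ab: "z = a - b" "a \<in> m1 (fst x) (fst x)" "b \<in> m1 (fst y) (fst y)"
    unfolding hsetminus_def by blast
  obtain c where c: "c \<in> m2 (snd x) (snd x)" using ne by blast
  obtain d where d: "d \<in> m2 (snd y) (snd y)" using ne by blast
  have "(a, c) - (b, d) \<in> hsetminus (prod_hop m1 m2 x x) (prod_hop m1 m2 y y)"
    unfolding hsetminus_def prod_hop_def using ab c d by blast
  then show "z \<in> P1" using h ab by auto
qed

lemma sq_in:
  assumes sdf: "sdf_absorbing m1 P1" and p: "p \<in> P1" "p \<noteq> 0"
    and x: "x \<noteq> 0" and sq: "m1 x x \<subseteq> P1"
  shows "x \<in> P1"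
proof -
  have hi: "hyperideal m1 P1" using sdf unfolding sdf_absorbing_def proper_hyperideal_def by blast
  have pp: "m1 p p \<subseteq> P1" using hi p unfolding hyperideal_def by blast
  have "hsetminus (m1 x x) (m1 p p) \<subseteq> P1"
    using hi sq pp unfolding hsetminus_def hyperideal_def by blast
  then have "x - p \<in> P1 \<or> x + p \<in> P1" using sdf x p unfolding sdf_absorbing_def by blast
  moreover have "x = (x - p) + p" "x = (x + p) - p" by simp_all
  moreover have "\<And>u v. u \<in> P1 \<Longrightarrow> v \<in> P1 \<Longrightarrow> u + v \<in> P1"
  proof -
    fix u v assume "u \<in> P1" "v \<in> P1"
    then have "0 - v \<in> P1" using hi unfolding hyperideal_def by (metis diff_self)
    then show "u + v \<in> P1" using hi \<open>u \<in> P1\<close> unfolding hyperideal_def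
      by (metis diff_0 diff_minus_eq_add)
  qed
  ultimately show ?thesis using hi p unfolding hyperideal_def by metis
qed

theorem mainTheorem15:
  fixes m1 :: "('a::ab_group_add) hop" and m2 :: "('b::ab_group_add) hop"
    and P1 :: "'a set" and P2 :: "'b set"
  assumes "comm_mult_hyperring m1" and "has_identity m1"
    and "comm_mult_hyperring m2" and "has_identity m2"
    and "strong_C_hyperideal m1 P1" and "P1 \<noteq> {0}" and "P1 \<noteq> UNIV"
    and "strong_C_hyperideal m2 P2" and "P2 \<noteq> {0}" and "P2 \<noteq> UNIV"
  shows "sdf_absorbing m1 P1 \<longleftrightarrow> sdf_absorbing (prod_hop m1 m2) (P1 \<times> (UNIV :: 'b set))"
proof -
  have hi: "hyperideal m1 P1" using assms(5) unfolding strong_C_hyperideal_def by blast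
  have ne1: "\<And>u v. m1 u v \<noteq> {}" using assms(1) unfolding comm_mult_hyperring_def by blast
  have ne2: "\<And>u v. m2 u v \<noteq> {}" using assms(3) unfolding comm_mult_hyperring_def by blast
  obtain p0 where p0: "p0 \<in> P1" using hi unfolding hyperideal_def by blast
  have z: "0 \<in> P1" using hi p0 unfolding hyperideal_def by (metis diff_self)
  obtain p where p: "p \<in> P1" "p \<noteq> 0" using assms(6) z by blast
  have hiP: "hyperideal (prod_hop m1 m2) (P1 \<times> (UNIV :: 'b set))"
    unfolding hyperideal_def prod_hop_def using hi unfolding hyperideal_def
    by (auto simp: subset_iff)
  show ?thesis
  proof
    assume sdf: "sdf_absorbing m1 P1"
    show "sdf_absorbing (prod_hop m1 m2) (P1 \<times> (UNIV :: 'b set))"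
      unfolding sdf_absorbing_def proper_hyperideal_def
    proof (intro conjI allI impI hiP)
      show "P1 \<times> (UNIV :: 'b set) \<noteq> UNIV" using assms(7) by auto
    next
      fix x y :: "'a \<times> 'b"
      assume x: "x \<noteq> 0" and y: "y \<noteq> 0"
        and h: "hsetminus (prod_hop m1 m2 x x) (prod_hop m1 m2 y y) \<subseteq> P1 \<times> UNIV"
      have h1: "hsetminus (m1 (fst x) (fst x)) (m1 (fst y) (fst y)) \<subseteq> P1"
        using minus_sub[OF ne2 h] .
      have sqsub: "m1 b b \<subseteq> P1" if "hsetminus (m1 a a) (m1 b b) \<subseteq> P1" "m1 a a \<subseteq> P1" for a b
      proof
        fix w assume w: "w \<in> m1 b b"
        obtain v where v: "v \<in> m1 a a" using ne1 by blast
        have "v - w \<in> P1" using that(1) v w unfolding hsetminus_def by blast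
        moreover have "v \<in> P1" using that(2) v by blast
        ultimately have "v - (v - w) \<in> P1" using hi unfolding hyperideal_def by blast
        then show "w \<in> P1" by simp
      qed
      have sqsub2: "m1 a a \<subseteq> P1" if "hsetminus (m1 a a) (m1 b b) \<subseteq> P1" "m1 b b \<subseteq> P1" for a b
      proof
        fix w assume w: "w \<in> m1 a a"
        obtain v where v: "v \<in> m1 b b" using ne1 by blast
        have "w - v \<in> P1" using that(1) v w unfolding hsetminus_def by blast
        moreover have "v \<in> P1" using that(2) v by blast
        ultimately have "(w - v) - (0 - v) \<in> P1" using hi z unfolding hyperideal_def by blast
        then show "w \<in> P1" by simp
      qed
      have z0: "m1 0 0 \<subseteq> P1" using hi z unfolding hyperideal_def by blast
      have neg: "- u \<in> P1" if "u \<in> P1" for u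
        using hi z that unfolding hyperideal_def by (metis diff_0)
      have "fst x - fst y \<in> P1 \<or> fst x + fst y \<in> P1"
      proof (cases "fst x = 0")
        case True
        show ?thesis
        proof (cases "fst y = 0")
          case True
          then show ?thesis using \<open>fst x = 0\<close> z by simp
        next
          case False
          have "m1 (fst y) (fst y) \<subseteq> P1" using sqsub h1 z0 True by simp
          then have "fst y \<in> P1" using sq_in[OF sdf p False] by blast
          then show ?thesis using True by simp
        qed
      next
        case False
        show ?thesis
        proof (cases "fst y = 0")
          case True
          have "m1 (fst x) (fst x) \<subseteq> P1" using sqsub2 h1 z0 True by simp
          then have "fst x \<in> P1" using sq_in[OF sdf p False] by blast
          then show ?thesis using True by simp
        next
          case yn: False
          then show ?thesis using sdf False h1 unfolding sdf_absorbing_def by blast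
        qed
      qed
      then show "x - y \<in> P1 \<times> UNIV \<or> x + y \<in> P1 \<times> UNIV" by (simp add: mem_Times_iff)
    qed
  next
    assume sdf: "sdf_absorbing (prod_hop m1 m2) (P1 \<times> (UNIV :: 'b set))"
    show "sdf_absorbing m1 P1"
      unfolding sdf_absorbing_def proper_hyperideal_def
    proof (intro conjI allI impI hi assms(7))
      fix x y :: 'a
      assume x: "x \<noteq> 0" and y: "y \<noteq> 0" and h: "hsetminus (m1 x x) (m1 y y) \<subseteq> P1"
      have "hsetminus (prod_hop m1 m2 (x, 0) (x, 0)) (prod_hop m1 m2 (y, 0) (y, 0)) \<subseteq> P1 \<times> (UNIV :: 'b set)"
        using h unfolding hsetminus_def prod_hop_def by auto
      moreover have "(x, 0::'b) \<noteq> 0" "(y, 0::'b) \<noteq> 0" using x y by (simp_all add: zero_prod_def)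
      ultimately have "(x, 0::'b) - (y, 0) \<in> P1 \<times> UNIV \<or> (x, 0::'b) + (y, 0) \<in> P1 \<times> UNIV"
        using sdf unfolding sdf_absorbing_def by blast
      then show "x - y \<in> P1 \<or> x + y \<in> P1" by auto
    qed
  qed
qed

end
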